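(* Let $\mathbb P$ be an LTF and $n<\omega$. Then: (i) if $T\in\mathbf{LT}$ and $s_0\in 2^n$, then $T(\to s_0)\in\mathbb P$ iff $T\in\mathbf{LC}_n(\mathbb P)$; (ii) if $P\in\mathbf{LC}_n(\mathbb P)$, $s_0\in 2^n$, $S\in\mathbb P$ and $S\subseteq P(\to s_0)$, then there is $Q\in\mathbf{LC}_n(\mathbb P)$ with $Q\subseteq_n P$ and $Q(\to s_0)=S$; (iii) if $P\in\mathbf{LC}_n(\mathbb P)$ and $D\subseteq\mathbb P$ is open dense in $\mathbb P$, then there is $Q\in\mathbf{LC}_n(\mathbb P)$ with $Q\subseteq_n P$ and $Q(\to s)\in D$ for all $s\in 2^n$; (iv) if $P\in\mathbf{LC}_n(\mathbb P)$, $S,T\in\mathbb P$, $s,t\in 2^n$, $S\subseteq P(\to s^\frown 0)$, $T\subseteq P(\to t^\frown 1)$, $\sigma\in 2^{<\omega}$ and $T=\sigma\cdot S$, then there is $Q\in\mathbf{LC}_{n+1}(\mathbb P)$ with $Q\subseteq_{n+1}P$, $Q(\to s^\frown0)\subseteq S$ and $Q(\to t^\frown1)\subseteq T$.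
   Context: Notation. $2^{<\omega}$ is the set of finite binary strings, $\Lambda$ the empty string, $\mathrm{lh}(s)$ the length of $s$, $2^n$ the set of strings of length $n$, $s\subseteq t$ means $t$ extends $s$, $s^\frown t$ concatenation. For strings $s,t$ with $\mathrm{lh}(s)\le\mathrm{lh}(t)$, $s\cdot t$ is the string of length $\mathrm{lh}(t)$ with $(s\cdot t)(k)=t(k)+s(k)\bmod 2$ for $k<\mathrm{lh}(s)$ and $(s\cdot t)(k)=t(k)$ otherwise; if $\mathrm{lh}(s)>\mathrm{lh}(t)$ then $s\cdot t=(s\restriction\mathrm{lh}(t))\cdot t$. For $T\subseteq 2^{<\omega}$, $s\cdot T=\{s\cdot t:t\in T\}$. For a tree $T$ and $s\in T$, $T\upharpoonright s=\{t\in T:s\subseteq t\lor t\subseteq s\}$. A perfect tree is a nonempty tree $T\subseteq 2^{<\omega}$ with no endpoints and no isolated branches; its stem $\mathrm{stem}(T)$ is the largest $s\in T$ with $T=T\upharpoonright s$. A perfect tree $T$ is large, written $T\in\mathbf{LT}$, if there are nonempty strings $q^i_n$ ($n<\omega$, $i=0,1$) with $\mathrm{lh}(q^0_n)=\mathrm{lh}(q^1_n)\ge1$ and $q^i_n(0)=i$, such that $T$ consists exactly of all initial segments of strings $r^\frown q^{i(0)}_0{}^\frown\cdots{}^\frown q^{i(n)}_n$, where $r=\mathrm{stem}(T)$, $n<\omega$, $i(0),\dots,i(n)\in\{0,1\}$. Its splitting levels are $\mathrm{spl}_0(T)=\mathrm{lh}(r)$, $\mathrm{spl}_{n+1}(T)=\mathrm{spl}_n(T)+\mathrm{lh}(q^0_n)$.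 For $T\in\mathbf{LT}$ and $i\in\{0,1\}$, $T(\to i)=T\upharpoonright(\mathrm{stem}(T)^\frown i)$; for $s\in 2^n$ with $n\ge1$, $T(\to s)=(\cdots((T(\to s(0)))(\to s(1)))\cdots)(\to s(n-1))$, and $T(\to\Lambda)=T$. For $S,T\in\mathbf{LT}$ and $n<\omega$, $S\subseteq_n T$ means $S\subseteq T$ and $\mathrm{spl}_k(S)=\mathrm{spl}_k(T)$ for all $k<n$. A large-tree forcing notion (LTF) is a set $\mathbb P\subseteq\mathbf{LT}$ such that $T\upharpoonright u\in\mathbb P$ whenever $u\in T\in\mathbb P$, and $s\cdot T\in\mathbb P$ whenever $T\in\mathbb P$ and $s\in 2^{<\omega}$; it is ordered by inclusion (smaller trees are stronger conditions). A tree $T\in\mathbf{LT}$ is an $n$-collage over $\mathbb P$ if $T(\to s)\in\mathbb P$ for all $s\in 2^n$; $\mathbf{LC}_n(\mathbb P)$ denotes the set of such trees. *)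

theory Defs
  imports Main "HOL-Library.Sublist"
begin

text \<open>Finite binary strings are modelled as bool lists (False = 0, True = 1);
  s \<subseteq> t is prefix s t, concatenation is @.\<close>

definition smul :: "bool list \<Rightarrow> bool list \<Rightarrow> bool list" where
  "smul s t = map (\<lambda>k. if k < length s then (s ! k \<noteq> t ! k) else t ! k) [0..<length t]"

definition smul_set :: "bool list \<Rightarrow> bool list set \<Rightarrow> bool list set" where
  "smul_set s T = smul s ` T"

definition is_tree :: "bool list set \<Rightarrow> bool" where
  "is_tree T \<longleftrightarrow> T \<noteq> {} \<and> (\<forall>t\<in>T. \<forall>u. prefix u t \<longrightarrow> u \<in> T)"

definition perfect_tree :: "bool list set \<Rightarrow> bool" where
  "perfect_tree T \<longleftrightarrow> is_tree T
     \<and> (\<forall>t\<in>T. \<exists>b. t @ [b] \<in> T)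
     \<and> (\<forall>t\<in>T. \<exists>u. prefix t u \<and> u @ [False] \<in> T \<and> u @ [True] \<in> T)"

definition restr :: "bool list set \<Rightarrow> bool list \<Rightarrow> bool list set" where
  "restr T s = {t \<in> T. prefix s t \<or> prefix t s}"

definition stem :: "bool list set \<Rightarrow> bool list" where
  "stem T = (THE s. s \<in> T \<and> T = restr T s \<and>
                    (\<forall>u. u \<in> T \<and> T = restr T u \<longrightarrow> prefix u s))"

text \<open>q n i plays the role of q^i_n.\<close>
definition LT_rep :: "bool list set \<Rightarrow> (nat \<Rightarrow> bool \<Rightarrow> bool list) \<Rightarrow> bool" where
  "LT_rep T q \<longleftrightarrow>
     (\<forall>n. length (q n False) = length (q n True) \<and> 1 \<le> length (q n False)
          \<and> hd (q n False) = False \<and> hd (q n True) = True)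
     \<and> T = {u. \<exists>n (i :: nat \<Rightarrow> bool).
                prefix u (stem T @ concat (map (\<lambda>k. q k (i k)) [0..<Suc n]))}"

definition LT :: "bool list set set" where
  "LT = {T. perfect_tree T \<and> (\<exists>q. LT_rep T q)}"

definition spl :: "bool list set \<Rightarrow> nat \<Rightarrow> nat" where
  "spl T k = (THE m. \<exists>q. LT_rep T q \<and>
                 m = length (stem T) + (\<Sum>j<k. length (q j False)))"

definition goto1 :: "bool list set \<Rightarrow> bool \<Rightarrow> bool list set" where
  "goto1 T i = restr T (stem T @ [i])"

definition goto :: "bool list set \<Rightarrow> bool list \<Rightarrow> bool list set" where
  "goto T s = fold (\<lambda>b S. goto1 S b) s T"

definition subn :: "bool list set \<Rightarrow> nat \<Rightarrow> bool list set \<Rightarrow> bool" where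
  "subn S n T \<longleftrightarrow> S \<subseteq> T \<and> (\<forall>k<n. spl S k = spl T k)"

definition LTF :: "bool list set set \<Rightarrow> bool" where
  "LTF P \<longleftrightarrow> P \<subseteq> LT
     \<and> (\<forall>T\<in>P. \<forall>u\<in>T. restr T u \<in> P)
     \<and> (\<forall>T\<in>P. \<forall>s. smul_set s T \<in> P)"

definition LC :: "nat \<Rightarrow> bool list set set \<Rightarrow> bool list set set" where
  "LC n P = {T \<in> LT. \<forall>s. length s = n \<longrightarrow> goto T s \<in> P}"

definition open_dense :: "bool list set set \<Rightarrow> bool list set set \<Rightarrow> bool" where
  "open_dense P D \<longleftrightarrow> D \<subseteq> P
     \<and> (\<forall>S\<in>D. \<forall>T\<in>P. T \<subseteq> S \<longrightarrow> T \<in> D)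
     \<and> (\<forall>S\<in>P. \<exists>T\<in>D. T \<subseteq> S)"

end

theory Submission
  imports Defs
begin

definition lvalid :: "(nat \<Rightarrow> bool \<Rightarrow> bool list) \<Rightarrow> bool" where
  "lvalid q \<longleftrightarrow> (\<forall>n. length (q n False) = length (q n True) \<and> 1 \<le> length (q n False)
          \<and> hd (q n False) = False \<and> hd (q n True) = True)"

fun lblk :: "(nat \<Rightarrow> bool \<Rightarrow> bool list) \<Rightarrow> bool list \<Rightarrow> bool list" where
  "lblk q [] = []"
| "lblk q (b#s) = q 0 b @ lblk (\<lambda>j. q (Suc j)) s"

definition lsh :: "nat \<Rightarrow> (nat \<Rightarrow> bool \<Rightarrow> bool list) \<Rightarrow> (nat \<Rightarrow> bool \<Rightarrow> bool list)" where
  "lsh k q = (\<lambda>j. q (j + k))"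

definition lpaths :: "bool list \<Rightarrow> (nat \<Rightarrow> bool \<Rightarrow> bool list) \<Rightarrow> bool list set" where
  "lpaths r q = {u. \<exists>s. prefix u (r @ lblk q s)}"

lemma lvalid_ne: "lvalid q \<Longrightarrow> q n b \<noteq> []"
proof -
  assume "lvalid q"
  then have "length (q n b) \<ge> 1" unfolding lvalid_def by (cases b) (metis (full_types))+
  then show ?thesis by auto
qed

lemma lvalid_hd: "lvalid q \<Longrightarrow> hd (q n b) = b"
  unfolding lvalid_def by (cases b) auto

lemma lvalid_len: "lvalid q \<Longrightarrow> length (q n b) = length (q n False)"
  unfolding lvalid_def by (cases b) auto

lemma lvalid_Cons: "lvalid q \<Longrightarrow> \<exists>w. q n b = b # w"
  using lvalid_ne[of q n b] lvalid_hd[of q n b] by (cases "q n b") auto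

lemma lvalid_sh: "lvalid q \<Longrightarrow> lvalid (lsh k q)"
  unfolding lvalid_def lsh_def by blast

lemma lvalid_suc: "lvalid q \<Longrightarrow> lvalid (\<lambda>j. q (Suc j))"
  unfolding lvalid_def by blast

lemma lsh_0[simp]: "lsh 0 q = q" unfolding lsh_def by simp

lemma lsh_suc: "lsh k (\<lambda>j. q (Suc j)) = lsh (Suc k) q"
  unfolding lsh_def by simp

lemma lblk_append: "lblk q (s @ z) = lblk q s @ lblk (lsh (length s) q) z"
proof (induction s arbitrary: q)
  case Nil then show ?case by simp
next
  case (Cons b s) then show ?case by (simp add: lsh_suc)
qed

lemma lblk_snoc: "lblk q (s @ [b]) = lblk q s @ q (length s) b"
  by (simp add: lblk_append lsh_def)

lemma lblk_cong: "(\<And>k. k < length s \<Longrightarrow> q k = q' k) \<Longrightarrow> lblk q s = lblk q' s"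
proof (induction s arbitrary: q q')
  case Nil then show ?case by simp
next
  case (Cons b s)
  have "lblk (\<lambda>j. q (Suc j)) s = lblk (\<lambda>j. q' (Suc j)) s"
    by (rule Cons.IH) (use Cons.prems in auto)
  then show ?case using Cons.prems[of 0] by simp
qed

lemma lblk_len: "lvalid q \<Longrightarrow> length s = length s' \<Longrightarrow> length (lblk q s) = length (lblk q s')"
proof (induction s arbitrary: s' q)
  case Nil then show ?case by simp
next
  case (Cons b s)
  then obtain c s'' where s': "s' = c # s''" by (cases s') auto
  have "length (lblk (\<lambda>j. q (Suc j)) s) = length (lblk (\<lambda>j. q (Suc j)) s'')"
    using Cons lvalid_suc s' by auto
  then show ?case using s' lvalid_len[OF Cons.prems(1), of 0 b] lvalid_len[OF Cons.prems(1), of 0 c] by simp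
qed

lemma lblk_len_ge: "lvalid q \<Longrightarrow> length s \<le> length (lblk q s)"
proof (induction s arbitrary: q)
  case Nil then show ?case by simp
next
  case (Cons b s)
  then have "length s \<le> length (lblk (\<lambda>j. q (Suc j)) s)" using lvalid_suc by blast
  moreover have "q 0 b \<noteq> []" using lvalid_ne[OF Cons.prems] .
  ultimately show ?case by (cases "q 0 b") auto
qed

lemma concat_lblk: "concat (map (\<lambda>k. q k (i k)) [0..<n]) = lblk q (map i [0..<n])"
  by (induction n) (auto simp: lblk_snoc)

lemma lpaths_alt: "{u. \<exists>n (i :: nat \<Rightarrow> bool). prefix u (r @ concat (map (\<lambda>k. q k (i k)) [0..<Suc n]))}
   = lpaths r q"
proof (rule set_eqI, rule iffI)
  fix u assume "u \<in> {u. \<exists>n (i :: nat \<Rightarrow> bool). prefix u (r @ concat (map (\<lambda>k. q k (i k)) [0..<Suc n]))}"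
  then obtain n i where "prefix u (r @ concat (map (\<lambda>k. q k (i k)) [0..<Suc n]))" by blast
  then show "u \<in> lpaths r q" unfolding lpaths_def concat_lblk by blast
next
  fix u assume "u \<in> lpaths r q"
  then obtain s where s: "prefix u (r @ lblk q s)" unfolding lpaths_def by blast
  define i where "i = (\<lambda>k. if k < length s then s ! k else False)"
  have "map i [0..<Suc (length s)] = s @ [False]"
    by (rule nth_equalityI) (auto simp: i_def nth_append)
  then have "r @ concat (map (\<lambda>k. q k (i k)) [0..<Suc (length s)]) = r @ lblk q s @ q (length s) False"
    by (simp add: concat_lblk lblk_snoc del: upt_Suc)
  then have "prefix u (r @ concat (map (\<lambda>k. q k (i k)) [0..<Suc (length s)]))"
    using s by (metis append.assoc prefix_append)
  then show "u \<in> {u. \<exists>n (i :: nat \<Rightarrow> bool). prefix u (r @ concat (map (\<lambda>k. q k (i k)) [0..<Suc n]))}"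
    by blast
qed

lemma LT_rep_iff: "LT_rep T q \<longleftrightarrow> lvalid q \<and> T = lpaths (stem T) q"
  unfolding LT_rep_def lvalid_def lpaths_alt by blast


lemma lpaths_mem: "u \<in> lpaths r q \<longleftrightarrow> (\<exists>s. prefix u (r @ lblk q s))"
  unfolding lpaths_def by simp

lemma lpaths_r: "r \<in> lpaths r q"
  unfolding lpaths_def by (auto intro: exI[of _ "[]"])

lemma lpaths_full: "r @ lblk q s \<in> lpaths r q"
  unfolding lpaths_def by auto

lemma lpaths_child: "lvalid q \<Longrightarrow> r @ [b] \<in> lpaths r q"
proof -
  assume v: "lvalid q"
  obtain w where "q 0 b = b # w" using lvalid_Cons[OF v] by blast
  then have "prefix (r @ [b]) (r @ lblk q [b])" by simp
  then show ?thesis unfolding lpaths_def by blast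
qed

lemma lpaths_comp: "u \<in> lpaths r q \<Longrightarrow> prefix u r \<or> prefix r u"
proof -
  assume "u \<in> lpaths r q"
  then obtain s where "prefix u (r @ lblk q s)" unfolding lpaths_def by blast
  moreover have "prefix r (r @ lblk q s)" by simp
  ultimately show ?thesis using prefix_same_cases by blast
qed

lemma lpaths_prefix_closed: "u \<in> lpaths r q \<Longrightarrow> prefix v u \<Longrightarrow> v \<in> lpaths r q"
  unfolding lpaths_def using prefix_order.trans by blast

lemma restr_lpaths_r: "restr (lpaths r q) r = lpaths r q"
  unfolding restr_def using lpaths_comp by blast

lemma stem_max: "lvalid q \<Longrightarrow> u \<in> lpaths r q \<Longrightarrow> lpaths r q = restr (lpaths r q) u \<Longrightarrow> prefix u r"
proof (rule ccontr)
  assume v: "lvalid q" and u: "u \<in> lpaths r q" and eq: "lpaths r q = restr (lpaths r q) u"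
    and np: "\<not> prefix u r"
  then have "prefix r u" using lpaths_comp by blast
  with np obtain c z where uz: "u = r @ c # z"
    by (metis append_Nil2 prefixE neq_Nil_conv prefix_order.refl)
  have "r @ [\<not> c] \<in> restr (lpaths r q) u" using eq lpaths_child[OF v] by blast
  then have "prefix (r @ [\<not> c]) u \<or> prefix u (r @ [\<not> c])" unfolding restr_def by blast
  then show False using uz by auto
qed

lemma stem_lpaths: "lvalid q \<Longrightarrow> stem (lpaths r q) = r"
  unfolding stem_def
proof (rule the_equality)
  assume v: "lvalid q"
  show "r \<in> lpaths r q \<and> lpaths r q = restr (lpaths r q) r \<and>
    (\<forall>u. u \<in> lpaths r q \<and> lpaths r q = restr (lpaths r q) u \<longrightarrow> prefix u r)"
    using lpaths_r restr_lpaths_r stem_max[OF v] by metis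
  fix s assume "s \<in> lpaths r q \<and> lpaths r q = restr (lpaths r q) s \<and>
    (\<forall>u. u \<in> lpaths r q \<and> lpaths r q = restr (lpaths r q) u \<longrightarrow> prefix u s)"
  then show "s = r" using lpaths_r restr_lpaths_r stem_max[OF v] prefix_order.antisym by metis
qed

lemma prefix_snoc_nth: "prefix u v \<Longrightarrow> length u < length v \<Longrightarrow> prefix (u @ [v ! length u]) v"
proof -
  assume "prefix u v" "length u < length v"
  then obtain c z where "v = u @ c # z" by (metis prefixE append_Nil2 less_not_refl neq_Nil_conv)
  then show ?thesis by simp
qed

lemma perfect_lpaths: "lvalid q \<Longrightarrow> perfect_tree (lpaths r q)"
  unfolding perfect_tree_def is_tree_def
proof (intro conjI ballI allI impI)
  assume v: "lvalid q"
  show "lpaths r q \<noteq> {}" using lpaths_r by blast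
  show "\<And>t u. t \<in> lpaths r q \<Longrightarrow> prefix u t \<Longrightarrow> u \<in> lpaths r q" using lpaths_prefix_closed by blast
  fix t assume t: "t \<in> lpaths r q"
  then obtain s where s: "prefix t (r @ lblk q s)" unfolding lpaths_def by blast
  have "length (r @ lblk q s) < length (r @ lblk q (s @ [False]))"
    using lvalid_ne[OF v] by (simp add: lblk_snoc)
  moreover have "prefix t (r @ lblk q (s @ [False]))" using s by (simp add: lblk_snoc)
    (metis append.assoc prefix_append)
  ultimately have "prefix (t @ [(r @ lblk q (s @ [False])) ! length t]) (r @ lblk q (s @ [False]))"
    using s prefix_length_le prefix_snoc_nth by (metis le_less_trans)
  then show "\<exists>b. t @ [b] \<in> lpaths r q" using lpaths_prefix_closed[OF lpaths_full] by blast
  show "\<exists>u. prefix t u \<and> u @ [False] \<in> lpaths r q \<and> u @ [True] \<in> lpaths r q"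
  proof (intro exI conjI)
    show "prefix t (r @ lblk q s)" by (fact s)
    have "r @ lblk q s @ [b] \<in> lpaths r q" for b
    proof -
      obtain w where "q (length s) b = b # w" using lvalid_Cons[OF v] by blast
      then have "prefix (r @ lblk q s @ [b]) (r @ lblk q (s @ [b]))" by (simp add: lblk_snoc)
      then show ?thesis using lpaths_prefix_closed[OF lpaths_full] by blast
    qed
    then show "(r @ lblk q s) @ [False] \<in> lpaths r q" "(r @ lblk q s) @ [True] \<in> lpaths r q" by auto
  qed
qed

lemma LT_lpaths: "lvalid q \<Longrightarrow> lpaths r q \<in> LT"
  unfolding LT_def using perfect_lpaths LT_rep_iff stem_lpaths by fastforce

lemma LT_rep_lpaths: "lvalid q \<Longrightarrow> LT_rep (lpaths r q) q"
  using LT_rep_iff stem_lpaths by metis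

lemma LT_E: "T \<in> LT \<Longrightarrow> \<exists>q. lvalid q \<and> T = lpaths (stem T) q"
  unfolding LT_def using LT_rep_iff by blast


lemma goto1_lpaths: "lvalid q \<Longrightarrow> goto1 (lpaths r q) b = lpaths (r @ q 0 b) (\<lambda>j. q (Suc j))"
proof -
  assume v: "lvalid q"
  obtain w where w: "q 0 b = b # w" using lvalid_Cons[OF v] by blast
  show ?thesis
    unfolding goto1_def stem_lpaths[OF v]
  proof (rule set_eqI, rule iffI)
    fix u assume "u \<in> restr (lpaths r q) (r @ [b])"
    then have u: "u \<in> lpaths r q" and cmp: "prefix (r @ [b]) u \<or> prefix u (r @ [b])"
      unfolding restr_def by auto
    from u obtain s where s: "prefix u (r @ lblk q s)" unfolding lpaths_def by blast
    show "u \<in> lpaths (r @ q 0 b) (\<lambda>j. q (Suc j))"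
    proof (cases "prefix u r")
      case True
      then have "prefix u ((r @ q 0 b) @ lblk (\<lambda>j. q (Suc j)) [])" by (metis prefix_append)
      then show ?thesis unfolding lpaths_def by blast
    next
      case False
      have "\<exists>z. u = r @ b # z"
      proof (cases "prefix (r @ [b]) u")
        case True
        then obtain z where "u = (r @ [b]) @ z" by (rule prefixE)
        then show ?thesis by auto
      next
        case False2: False
        then have "prefix u (r @ [b])" using cmp by blast
        then have "u = r @ [b]" using False by (simp add: prefix_snoc)
        then show ?thesis by auto
      qed
      then obtain z where uz: "u = r @ b # z" by blast
      define d where "d = b"
      have db: "d = b" by (simp add: d_def)
      have uz: "u = r @ d # z" using uz d_def by simp
      from s uz obtain c s' where s': "s = c # s'" by (cases s) auto
      obtain w' where w': "q 0 c = c # w'" using lvalid_Cons[OF v] by blast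
      have "d = c" using s uz s' w' by simp
      then show ?thesis using s uz s' db unfolding lpaths_def by auto
    qed
  next
    fix u assume "u \<in> lpaths (r @ q 0 b) (\<lambda>j. q (Suc j))"
    then obtain s where s: "prefix u (r @ q 0 b @ lblk (\<lambda>j. q (Suc j)) s)" unfolding lpaths_def by auto
    then have "prefix u (r @ lblk q (b # s))" by simp
    then have "u \<in> lpaths r q" unfolding lpaths_def by blast
    moreover have "prefix (r @ [b]) (r @ q 0 b @ lblk (\<lambda>j. q (Suc j)) s)" using w by simp
    ultimately show "u \<in> restr (lpaths r q) (r @ [b])" using s prefix_same_cases
      unfolding restr_def by blast
  qed
qed

lemma goto_lpaths: "lvalid q \<Longrightarrow> goto (lpaths r q) s = lpaths (r @ lblk q s) (lsh (length s) q)"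
proof (induction s arbitrary: r q)
  case Nil then show ?case by (simp add: goto_def)
next
  case (Cons b s)
  have "goto (lpaths r q) (b # s) = goto (goto1 (lpaths r q) b) s" by (simp add: goto_def)
  also have "\<dots> = goto (lpaths (r @ q 0 b) (\<lambda>j. q (Suc j))) s" using goto1_lpaths[OF Cons.prems] by simp
  also have "\<dots> = lpaths (r @ q 0 b @ lblk (\<lambda>j. q (Suc j)) s) (lsh (length s) (\<lambda>j. q (Suc j)))"
    using Cons.IH lvalid_suc[OF Cons.prems] by simp
  finally show ?case by (simp add: lsh_suc)
qed

lemma goto_Cons: "goto T (b # s) = goto (goto1 T b) s" by (simp add: goto_def)

lemma goto_subset: "goto T s \<subseteq> T"
proof (induction s arbitrary: T)
  case Nil then show ?case by (simp add: goto_def)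
next
  case (Cons b s)
  have "goto1 T b \<subseteq> T" unfolding goto1_def restr_def by auto
  then show ?case using Cons.IH[of "goto1 T b"] by (simp add: goto_Cons)
qed

lemma lq_unique0: "lvalid q1 \<Longrightarrow> lvalid q2 \<Longrightarrow> lpaths r q1 = lpaths r q2 \<Longrightarrow> q1 0 = q2 0 \<and>
   (\<forall>b. lpaths (r @ q1 0 b) (\<lambda>j. q1 (Suc j)) = lpaths (r @ q1 0 b) (\<lambda>j. q2 (Suc j)))"
proof -
  assume v1: "lvalid q1" and v2: "lvalid q2" and e: "lpaths r q1 = lpaths r q2"
  have g: "lpaths (r @ q1 0 b) (\<lambda>j. q1 (Suc j)) = lpaths (r @ q2 0 b) (\<lambda>j. q2 (Suc j))" for b
    using goto1_lpaths[OF v1, of r b] goto1_lpaths[OF v2, of r b] e by simp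
  have "r @ q1 0 b = r @ q2 0 b" for b
    using arg_cong[OF g[of b], of stem] stem_lpaths lvalid_suc v1 v2 by metis
  then have "q1 0 = q2 0" by auto
  then show ?thesis using g by simp
qed

lemma lq_unique: "lvalid q1 \<Longrightarrow> lvalid q2 \<Longrightarrow> lpaths r q1 = lpaths r q2 \<Longrightarrow> q1 = q2"
proof -
  have "\<forall>r q1 q2. lvalid q1 \<longrightarrow> lvalid q2 \<longrightarrow> lpaths r q1 = lpaths r q2 \<longrightarrow> q1 k = q2 k" for k
  proof (induction k)
    case 0 then show ?case using lq_unique0 by blast
  next
    case (Suc k)
    show ?case
    proof (intro allI impI)
      fix r q1 q2 assume v1: "lvalid q1" and v2: "lvalid q2" and e: "lpaths r q1 = lpaths r q2"
      then have "lpaths (r @ q1 0 False) (\<lambda>j. q1 (Suc j)) = lpaths (r @ q1 0 False) (\<lambda>j. q2 (Suc j))"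
        using lq_unique0 by blast
      then show "q1 (Suc k) = q2 (Suc k)" using Suc.IH lvalid_suc[OF v1] lvalid_suc[OF v2] by blast
    qed
  qed
  then show "lvalid q1 \<Longrightarrow> lvalid q2 \<Longrightarrow> lpaths r q1 = lpaths r q2 \<Longrightarrow> q1 = q2" by blast
qed

lemma spl_lpaths: "lvalid q \<Longrightarrow> spl (lpaths r q) k = length r + (\<Sum>j<k. length (q j False))"
  unfolding spl_def
proof (rule the_equality)
  assume v: "lvalid q"
  show "\<exists>q'. LT_rep (lpaths r q) q' \<and>
    length r + (\<Sum>j<k. length (q j False)) = length (stem (lpaths r q)) + (\<Sum>j<k. length (q' j False))"
    using LT_rep_lpaths[OF v] stem_lpaths[OF v] by auto
  fix m assume "\<exists>q'. LT_rep (lpaths r q) q' \<and> m = length (stem (lpaths r q)) + (\<Sum>j<k. length (q' j False))"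
  then obtain q' where q': "LT_rep (lpaths r q) q'" and m: "m = length r + (\<Sum>j<k. length (q' j False))"
    using stem_lpaths[OF v] by auto
  have "lvalid q'" "lpaths r q = lpaths r q'" using q' LT_rep_iff stem_lpaths[OF v] by metis+
  then have "q' = q" using lq_unique v by metis
  then show "m = length r + (\<Sum>j<k. length (q j False))" using m by simp
qed


lemma smul_len[simp]: "length (smul x t) = length t"
  unfolding smul_def by simp

lemma smul_nth: "k < length t \<Longrightarrow> smul x t ! k = (if k < length x then x ! k \<noteq> t ! k else t ! k)"
  unfolding smul_def by simp

lemma smul_app: "length x \<le> length r \<Longrightarrow> smul x (r @ w) = smul x r @ w"
  by (rule nth_equalityI) (auto simp: smul_nth nth_append)

lemma smul_take: "smul x (take n v) = take n (smul x v)"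
  by (rule nth_equalityI) (auto simp: smul_nth)

lemma smul_prefix: "prefix u v \<Longrightarrow> prefix (smul x u) (smul x v)"
proof -
  assume "prefix u v"
  then have "u = take (length u) v" by (metis append_eq_conv_conj prefixE)
  then have "smul x u = take (length u) (smul x v)" by (metis smul_take)
  then show ?thesis by (metis take_is_prefix)
qed

lemma smul_inv[simp]: "smul x (smul x u) = u"
  by (rule nth_equalityI) (auto simp: smul_nth)

lemma smul_xor: "length a = length b \<Longrightarrow> smul (smul a b) b = a"
  by (rule nth_equalityI) (auto simp: smul_nth)

lemma smul_set_lpaths: "length x \<le> length r \<Longrightarrow> smul_set x (lpaths r q) = lpaths (smul x r) q"
proof -
  assume l: "length x \<le> length r"
  show ?thesis unfolding smul_set_def
  proof (rule set_eqI, rule iffI)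
    fix v assume "v \<in> smul x ` lpaths r q"
    then obtain u s where v: "v = smul x u" and "prefix u (r @ lblk q s)" unfolding lpaths_def by blast
    then have "prefix v (smul x r @ lblk q s)" using smul_prefix smul_app[OF l] by metis
    then show "v \<in> lpaths (smul x r) q" unfolding lpaths_def by blast
  next
    fix v assume "v \<in> lpaths (smul x r) q"
    then obtain s where "prefix v (smul x r @ lblk q s)" unfolding lpaths_def by blast
    then have "prefix v (smul x (r @ lblk q s))" using smul_app[OF l] by metis
    then have "prefix (smul x v) (r @ lblk q s)" using smul_prefix smul_inv by metis
    then have "smul x v \<in> lpaths r q" unfolding lpaths_def by blast
    then show "v \<in> smul x ` lpaths r q" using smul_inv by (metis image_eqI)
  qed
qed

lemma smul_set_mono: "A \<subseteq> B \<Longrightarrow> smul_set x A \<subseteq> smul_set x B"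
  unfolding smul_set_def by auto

lemma LTF_goto: "LTF P \<Longrightarrow> T \<in> P \<Longrightarrow> goto T s \<in> P"
proof (induction s arbitrary: T)
  case Nil then show ?case by (simp add: goto_def)
next
  case (Cons b s)
  have "T \<in> LT" using Cons.prems unfolding LTF_def by blast
  then obtain q where v: "lvalid q" and T: "T = lpaths (stem T) q" using LT_E by blast
  have "stem T @ [b] \<in> T" using lpaths_child[OF v] T by metis
  then have "goto1 T b \<in> P" using Cons.prems unfolding LTF_def goto1_def by blast
  then show ?case using Cons.IH Cons.prems by (simp add: goto_Cons)
qed

lemma LTF_smul: "LTF P \<Longrightarrow> T \<in> P \<Longrightarrow> smul_set x T \<in> P"
  unfolding LTF_def by blast

lemma LTF_LT: "LTF P \<Longrightarrow> T \<in> P \<Longrightarrow> T \<in> LT"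
  unfolding LTF_def by blast

lemma lpaths_cover: "lvalid q \<Longrightarrow> u \<in> lpaths r q \<Longrightarrow> \<exists>s. length s = N \<and> u \<in> goto (lpaths r q) s"
proof -
  assume v: "lvalid q" and "u \<in> lpaths r q"
  then obtain s where s: "prefix u (r @ lblk q s)" unfolding lpaths_def by blast
  define s' where "s' = s @ replicate (N - length s) False"
  have "prefix u (r @ lblk q s')" using s unfolding s'_def lblk_append
    by (metis append.assoc prefix_append)
  moreover have "N \<le> length s'" unfolding s'_def by simp
  ultimately have "prefix u (r @ lblk q (take N s') @ lblk (lsh N q) (drop N s'))"
    using lblk_append[of q "take N s'" "drop N s'"] by simp
  then have "u \<in> lpaths (r @ lblk q (take N s')) (lsh N q)"
    unfolding lpaths_def by (metis (mono_tags, lifting) append.assoc mem_Collect_eq)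
  then have "u \<in> goto (lpaths r q) (take N s')" using \<open>N \<le> length s'\<close>
    by (simp add: goto_lpaths[OF v])
  moreover have "length (take N s') = N" using \<open>N \<le> length s'\<close> by simp
  ultimately show ?thesis by blast
qed

lemma LT_cover: "T \<in> LT \<Longrightarrow> u \<in> T \<Longrightarrow> \<exists>s. length s = N \<and> u \<in> goto T s"
  using LT_E lpaths_cover by metis

lemma LT_sub_by_goto: "T \<in> LT \<Longrightarrow> (\<And>s. length s = N \<Longrightarrow> goto T s \<subseteq> goto T' s) \<Longrightarrow> T \<subseteq> T'"
  using LT_cover goto_subset by blast

lemma lpaths_contain: "lvalid q' \<Longrightarrow> lpaths r' q' \<subseteq> lpaths p qp \<Longrightarrow> prefix p r'"
proof (rule ccontr)
  assume v: "lvalid q'" and sub: "lpaths r' q' \<subseteq> lpaths p qp" and np: "\<not> prefix p r'"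
  have c: "r' @ [b] \<in> lpaths p qp" for b using lpaths_child[OF v] sub by blast
  then have "prefix r' p" using np lpaths_comp prefix_order.trans
    by (metis prefix_append prefix_order.refl c)
  with np obtain d z where pz: "p = r' @ d # z"
    by (metis append_Nil2 prefixE neq_Nil_conv)
  have "prefix (r' @ [\<not> d]) p \<or> prefix p (r' @ [\<not> d])" using lpaths_comp c by blast
  then show False using pz by auto
qed

lemma goto_xor: "lvalid q \<Longrightarrow> length s = length s0 \<Longrightarrow>
  goto (lpaths r q) s = smul_set (smul (r @ lblk q s) (r @ lblk q s0)) (goto (lpaths r q) s0)"
proof -
  assume v: "lvalid q" and l: "length s = length s0"
  have ll: "length (r @ lblk q s) = length (r @ lblk q s0)" using lblk_len[OF v l] by simp
  show ?thesis unfolding goto_lpaths[OF v] l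
    by (subst smul_set_lpaths) (simp_all add: smul_xor[OF ll])
qed


lemma goto_graft: "lvalid q3 \<Longrightarrow> (\<And>k. k < n \<Longrightarrow> q3 k = q k) \<Longrightarrow> length u = n \<Longrightarrow>
  goto (lpaths r q3) (u @ [b]) = lpaths (r @ lblk q u @ q3 n b) (lsh (Suc n) q3)"
proof -
  assume v: "lvalid q3" and e: "\<And>k. k < n \<Longrightarrow> q3 k = q k" and l: "length u = n"
  have "lblk q3 u = lblk q u" using e l by (metis lblk_cong)
  then show ?thesis using l by (simp add: goto_lpaths[OF v] lblk_snoc)
qed

lemma part1: "LTF P \<Longrightarrow> T \<in> LT \<Longrightarrow> length s0 = n \<Longrightarrow> (goto T s0 \<in> P \<longleftrightarrow> T \<in> LC n P)"
proof
  assume P: "LTF P" and T: "T \<in> LT" and l: "length s0 = n" and g: "goto T s0 \<in> P"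
  obtain q where v: "lvalid q" and Te: "T = lpaths (stem T) q" using LT_E[OF T] by blast
  have "goto T s \<in> P" if "length s = n" for s
    using goto_xor[OF v, of s s0 "stem T"] that l LTF_smul[OF P g] Te by metis
  then show "T \<in> LC n P" unfolding LC_def using T by blast
next
  assume "T \<in> LC n P" "length s0 = n" then show "goto T s0 \<in> P" unfolding LC_def by blast
qed

lemma part2: "LTF P \<Longrightarrow> Pt \<in> LC n P \<Longrightarrow> length s0 = n \<Longrightarrow> S \<in> P \<Longrightarrow> S \<subseteq> goto Pt s0 \<Longrightarrow>
  \<exists>Q\<in>LC n P. subn Q n Pt \<and> goto Q s0 = S \<and> (\<forall>s. length s = n \<longrightarrow> goto Q s \<subseteq> goto Pt s)"
proof (cases n)
  case 0
  assume P: "LTF P" and Pt: "Pt \<in> LC n P" and l: "length s0 = n" and S: "S \<in> P" and sub: "S \<subseteq> goto Pt s0"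
  have s0: "s0 = []" using l 0 by simp
  have "S \<in> LC n P" unfolding LC_def using 0 S LTF_LT[OF P S] by (auto simp: goto_def)
  moreover have "subn S n Pt" unfolding subn_def using 0 sub s0 by (simp add: goto_def)
  moreover have "goto S s0 = S" using s0 by (simp add: goto_def)
  moreover have "\<forall>s. length s = n \<longrightarrow> goto S s \<subseteq> goto Pt s" using 0 sub s0 by (simp add: goto_def)
  ultimately show ?thesis by blast
next
  case (Suc m)
  assume P: "LTF P" and Pt: "Pt \<in> LC n P" and l: "length s0 = n" and S: "S \<in> P" and sub: "S \<subseteq> goto Pt s0"
  have PtLT: "Pt \<in> LT" using Pt unfolding LC_def by blast
  obtain r q where v: "lvalid q" and Pte: "Pt = lpaths r q" using LT_E[OF PtLT] by blast
  obtain qS where vS: "lvalid qS" and Se: "S = lpaths (stem S) qS" using LT_E[OF LTF_LT[OF P S]] by blast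
  define rS where "rS = stem S"
  define p0 where "p0 = r @ lblk q s0"
  have g0: "goto Pt s0 = lpaths p0 (lsh n q)" unfolding Pte goto_lpaths[OF v] p0_def l ..
  have "prefix p0 rS" using lpaths_contain[OF vS, of rS p0 "lsh n q"] sub Se g0 rS_def by simp
  then obtain w where rSw: "rS = p0 @ w" by (metis prefixE)
  define q2 where "q2 = (\<lambda>k. if k < m then q k else if k = m then (\<lambda>b. q m b @ w) else qS (k - n))"
  have v2: "lvalid q2"
  proof -
    have "length (q2 k False) = length (q2 k True) \<and> 1 \<le> length (q2 k False)
          \<and> hd (q2 k False) = False \<and> hd (q2 k True) = True" for k
    proof (cases "k < m")
      case True
      then have e: "q2 k = q k" by (simp add: q2_def)
      show ?thesis unfolding e using v unfolding lvalid_def by blast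
    next
      case False
      show ?thesis
      proof (cases "k = m")
        case True
        have "q m b \<noteq> []" "hd (q m b) = b" for b using lvalid_ne[OF v] lvalid_hd[OF v] by auto
        moreover have "Suc 0 \<le> length (q m False) + length w" using lvalid_ne[OF v, of m False]
          by (cases "q m False") auto
        ultimately show ?thesis using True lvalid_len[OF v, of m True] unfolding q2_def by simp
      next
        case False2: False
        then have e: "q2 k = qS (k - (n))" using False by (simp add: q2_def)
        show ?thesis unfolding e using vS unfolding lvalid_def by blast
      qed
    qed
    then show ?thesis unfolding lvalid_def by blast
  qed
  have lsh2: "lsh (Suc m) q2 = qS" unfolding lsh_def q2_def using Suc by (auto intro!: ext)
  define Q where "Q = lpaths r q2"
  have gQ: "goto Q s = lpaths (r @ lblk q s @ w) qS" if ls: "length s = n" for s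
  proof -
    obtain u b where s: "s = u @ [b]" using ls Suc by (metis length_Suc_conv_rev)
    have lu: "length u = m" using s ls Suc by simp
    have "goto Q s = lpaths (r @ lblk q u @ q2 m b) (lsh (Suc m) q2)"
      unfolding Q_def s by (rule goto_graft[OF v2 _ lu]) (simp add: q2_def)
    then show ?thesis using lsh2 s lu by (simp add: q2_def lblk_snoc)
  qed
  have gQx: "goto Q s = smul_set (smul (r @ lblk q s) p0) S" if ls: "length s = n" for s
  proof -
    have ll: "length (r @ lblk q s) = length p0" unfolding p0_def using lblk_len[OF v, of s s0] ls l by simp
    have "smul_set (smul (r @ lblk q s) p0) S = lpaths (smul (smul (r @ lblk q s) p0) (p0 @ w)) qS"
      using Se rSw rS_def smul_set_lpaths[of "smul (r @ lblk q s) p0" "p0 @ w" qS] ll by simp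
    also have "\<dots> = lpaths (r @ lblk q s @ w) qS" using smul_app[of "smul (r @ lblk q s) p0" p0 w] ll
      by (simp add: smul_xor[OF ll])
    finally show ?thesis using gQ[OF ls] by simp
  qed
  have sub2: "goto Q s \<subseteq> goto Pt s" if ls: "length s = n" for s
  proof -
    have "goto Pt s = smul_set (smul (r @ lblk q s) p0) (goto Pt s0)"
      unfolding Pte p0_def using goto_xor[OF v, of s s0 r] ls l by simp
    then show ?thesis using gQx[OF ls] smul_set_mono[OF sub] by simp
  qed
  have QLT: "Q \<in> LT" unfolding Q_def using LT_lpaths[OF v2] .
  have QLC: "Q \<in> LC n P" unfolding LC_def using QLT gQx LTF_smul[OF P S] by auto
  have "Q \<subseteq> Pt" using LT_sub_by_goto[OF QLT, of n Pt] sub2 goto_subset by blast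
  moreover have "spl Q k = spl Pt k" if "k < n" for k
  proof -
    have "(\<Sum>j<k. length (q2 j False)) = (\<Sum>j<k. length (q j False))"
      using that Suc by (intro sum.cong) (auto simp: q2_def)
    then show ?thesis unfolding Q_def Pte spl_lpaths[OF v2] spl_lpaths[OF v] by simp
  qed
  ultimately have "subn Q n Pt" unfolding subn_def by blast
  moreover have "goto Q s0 = S" using gQ[OF l] Se rSw rS_def p0_def by simp
  ultimately show ?thesis using QLC sub2 by blast
qed


lemma part3_list: "LTF P \<Longrightarrow> Pt \<in> LC n P \<Longrightarrow> open_dense P D \<Longrightarrow> \<forall>s\<in>set L. length s = n \<Longrightarrow>
  \<exists>Q\<in>LC n P. subn Q n Pt \<and> (\<forall>s\<in>set L. goto Q s \<in> D)"
proof (induction L)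
  case Nil
  then show ?case unfolding subn_def by auto
next
  case (Cons s L)
  then obtain Q1 where Q1: "Q1 \<in> LC n P" "subn Q1 n Pt" "\<forall>s\<in>set L. goto Q1 s \<in> D" by auto
  have ls: "length s = n" using Cons.prems by simp
  have "goto Q1 s \<in> P" using Q1(1) ls unfolding LC_def by blast
  then obtain S where S: "S \<in> D" "S \<subseteq> goto Q1 s" using Cons.prems(3) unfolding open_dense_def by blast
  have SP: "S \<in> P" using S(1) Cons.prems(3) unfolding open_dense_def by blast
  obtain Q2 where Q2: "Q2 \<in> LC n P" "subn Q2 n Q1" "goto Q2 s = S"
    "\<forall>s. length s = n \<longrightarrow> goto Q2 s \<subseteq> goto Q1 s"
    using part2[OF Cons.prems(1) Q1(1) ls SP S(2)] by blast
  have "goto Q2 s' \<in> D" if "s' \<in> set L" for s'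
  proof -
    have l': "length s' = n" using that Cons.prems by simp
    have "goto Q2 s' \<in> P" using Q2(1) l' unfolding LC_def by blast
    moreover have "goto Q2 s' \<subseteq> goto Q1 s'" using Q2(4) l' by blast
    ultimately show ?thesis using Q1(3) that Cons.prems(3) unfolding open_dense_def by blast
  qed
  moreover have "subn Q2 n Pt" using Q2(2) Q1(2) unfolding subn_def by auto
  ultimately show ?case using Q2 S(1) by auto
qed

lemma part3: "LTF P \<Longrightarrow> Pt \<in> LC n P \<Longrightarrow> open_dense P D \<Longrightarrow>
  \<exists>Q\<in>LC n P. subn Q n Pt \<and> (\<forall>s. length s = n \<longrightarrow> goto Q s \<in> D)"
proof -
  assume a: "LTF P" "Pt \<in> LC n P" "open_dense P D"
  have "set (List.n_lists n [False, True]) = {s. length s = n}"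
    by (auto simp: set_n_lists)
  then show ?thesis using part3_list[OF a, of "List.n_lists n [False, True]"] by auto
qed


lemma prefix_app_drop: "prefix (p @ a) v \<Longrightarrow> v = p @ drop (length p) v \<and> prefix a (drop (length p) v)"
  by (metis append_eq_conv_conj prefix_def append.assoc)

lemma part4: "LTF P \<Longrightarrow> Pt \<in> LC n P \<Longrightarrow> S \<in> P \<Longrightarrow> T \<in> P \<Longrightarrow> length s = n \<Longrightarrow> length t = n
  \<Longrightarrow> S \<subseteq> goto Pt (s @ [False]) \<Longrightarrow> T \<subseteq> goto Pt (t @ [True]) \<Longrightarrow> T = smul_set \<sigma> S \<Longrightarrow>
  \<exists>Q \<in> LC (Suc n) P. subn Q (Suc n) Pt \<and> goto Q (s @ [False]) \<subseteq> S \<and> goto Q (t @ [True]) \<subseteq> T"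
proof -
  assume P: "LTF P" and Pt: "Pt \<in> LC n P" and S: "S \<in> P" and T: "T \<in> P" and ls: "length s = n"
    and lt: "length t = n" and subS: "S \<subseteq> goto Pt (s @ [False])" and subT: "T \<subseteq> goto Pt (t @ [True])"
    and TS: "T = smul_set \<sigma> S"
  have PtLT: "Pt \<in> LT" using Pt unfolding LC_def by blast
  obtain r q where v: "lvalid q" and Pte: "Pt = lpaths r q" using LT_E[OF PtLT] by blast
  obtain qS where vS: "lvalid qS" and Se: "S = lpaths (stem S) qS" using LT_E[OF LTF_LT[OF P S]] by blast
  define rS where "rS = stem S"
  define vv where "vv = replicate (length \<sigma>) False"
  define r1 where "r1 = rS @ lblk qS vv"
  define q1 where "q1 = lsh (length \<sigma>) qS"
  have v1: "lvalid q1" unfolding q1_def using lvalid_sh[OF vS] .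
  define S' where "S' = goto S vv"
  have S'e: "S' = lpaths r1 q1" unfolding S'_def r1_def q1_def vv_def
    using goto_lpaths[OF vS] Se rS_def by (metis length_replicate)
  have S'P: "S' \<in> P" unfolding S'_def using LTF_goto[OF P S] .
  have S'S: "S' \<subseteq> S" unfolding S'_def using goto_subset .
  have lr1: "length \<sigma> \<le> length r1" unfolding r1_def
    using lblk_len_ge[OF vS, of vv] unfolding vv_def by simp
  define T' where "T' = smul_set \<sigma> S'"
  have T'e: "T' = lpaths (smul \<sigma> r1) q1" unfolding T'_def S'e using smul_set_lpaths[OF lr1] .
  have T'P: "T' \<in> P" unfolding T'_def using LTF_smul[OF P S'P] .
  have T'T: "T' \<subseteq> T" unfolding T'_def TS using smul_set_mono[OF S'S] .
  define ps where "ps = r @ lblk q s"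
  define pt where "pt = r @ lblk q t"
  have lpst: "length ps = length pt" unfolding ps_def pt_def using lblk_len[OF v, of s t] ls lt by simp
  have gPs: "goto Pt (u @ [b]) = lpaths ((r @ lblk q u) @ q n b) (lsh (Suc n) q)" if "length u = n" for u b
    unfolding Pte goto_lpaths[OF v] using that by (simp add: lblk_snoc)
  have "prefix (ps @ q n False) r1"
    using lpaths_contain[OF v1, of r1] S'S subS gPs[OF ls] S'e ps_def by blast
  then obtain w0 where r1e: "r1 = ps @ w0" and pw0: "prefix (q n False) w0"
    using prefix_app_drop by blast
  have "prefix (pt @ q n True) (smul \<sigma> r1)"
    using lpaths_contain[OF v1, of "smul \<sigma> r1"] T'T subT gPs[OF lt] T'e pt_def by blast
  then obtain w1 where r1e': "smul \<sigma> r1 = pt @ w1" and pw1: "prefix (q n True) w1"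
    using prefix_app_drop by blast
  have lw: "length w0 = length w1"
    using arg_cong[OF r1e', of length] r1e lpst by simp
  have hw0: "w0 \<noteq> [] \<and> hd w0 = False" using pw0 lvalid_Cons[OF v, of n False]
    by (auto simp: prefix_def)
  have hw1: "w1 \<noteq> [] \<and> hd w1 = True" using pw1 lvalid_Cons[OF v, of n True]
    by (auto simp: prefix_def)
  define q3 where "q3 = (\<lambda>k. if k < n then q k else if k = n then (\<lambda>b. if b then w1 else w0)
                          else q1 (k - Suc n))"
  have v3: "lvalid q3"
  proof -
    have "length (q3 k False) = length (q3 k True) \<and> 1 \<le> length (q3 k False)
          \<and> hd (q3 k False) = False \<and> hd (q3 k True) = True" for k
    proof (cases "k < n")
      case True
      then have e: "q3 k = q k" by (simp add: q3_def)
      show ?thesis unfolding e using v unfolding lvalid_def by blast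
    next
      case False
      show ?thesis
      proof (cases "k = n")
        case True
        then show ?thesis using hw0 hw1 lw unfolding q3_def by (cases w0) auto
      next
        case False2: False
        then have e: "q3 k = q1 (k - (Suc n))" using False by (simp add: q3_def)
        show ?thesis unfolding e using v1 unfolding lvalid_def by blast
      qed
    qed
    then show ?thesis unfolding lvalid_def by blast
  qed
  have lsh3: "lsh (Suc n) q3 = q1" unfolding lsh_def q3_def by (auto intro!: ext)
  define Q where "Q = lpaths r q3"
  have gQ: "goto Q (u @ [b]) = lpaths ((r @ lblk q u) @ (if b then w1 else w0)) q1" if lu: "length u = n" for u b
  proof -
    have "goto Q (u @ [b]) = lpaths (r @ lblk q u @ q3 n b) (lsh (Suc n) q3)"
      unfolding Q_def by (rule goto_graft[OF v3 _ lu]) (simp add: q3_def)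
    then show ?thesis using lsh3 by (simp add: q3_def)
  qed
  have gQ0: "goto Q (u @ [False]) = smul_set (smul (r @ lblk q u) ps) S'"
    "goto Q (u @ [False]) \<subseteq> goto Pt (u @ [False])" if lu: "length u = n" for u
  proof -
    define x where "x = smul (r @ lblk q u) ps"
    have ll: "length (r @ lblk q u) = length ps" unfolding ps_def using lblk_len[OF v, of u s] lu ls by simp
    have lx: "length x = length ps" unfolding x_def by simp
    have "smul_set x S' = lpaths (smul x (ps @ w0)) q1" unfolding S'e r1e
      by (rule smul_set_lpaths) (simp add: lx)
    also have "\<dots> = lpaths ((r @ lblk q u) @ w0) q1"
      using smul_app[of x ps w0] lx by (simp add: x_def smul_xor[OF ll])
    finally show "goto Q (u @ [False]) = smul_set (smul (r @ lblk q u) ps) S'"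
      using gQ[OF lu, of False] x_def by simp
    have "smul_set x (goto Pt (s @ [False])) = lpaths (smul x (ps @ q n False)) (lsh (Suc n) q)"
      unfolding gPs[OF ls] ps_def[symmetric] by (rule smul_set_lpaths) (simp add: lx)
    also have "\<dots> = goto Pt (u @ [False])"
      using smul_app[of x ps "q n False"] lx gPs[OF lu] by (simp add: x_def smul_xor[OF ll])
    finally show "goto Q (u @ [False]) \<subseteq> goto Pt (u @ [False])"
      using \<open>smul_set x S' = _\<close> gQ[OF lu, of False] smul_set_mono[OF order.trans[OF S'S subS], of x]
      by (metis \<open>lpaths (smul x (ps @ w0)) q1 = _\<close>)
  qed
  have gQ1: "goto Q (u @ [True]) = smul_set (smul (r @ lblk q u) pt) T'"
    "goto Q (u @ [True]) \<subseteq> goto Pt (u @ [True])" if lu: "length u = n" for u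
  proof -
    define x where "x = smul (r @ lblk q u) pt"
    have ll: "length (r @ lblk q u) = length pt" unfolding pt_def using lblk_len[OF v, of u t] lu lt by simp
    have lx: "length x = length pt" unfolding x_def by simp
    have "smul_set x T' = lpaths (smul x (pt @ w1)) q1" unfolding T'e r1e'
      by (rule smul_set_lpaths) (simp add: lx)
    also have "\<dots> = lpaths ((r @ lblk q u) @ w1) q1"
      using smul_app[of x pt w1] lx by (simp add: x_def smul_xor[OF ll])
    finally show "goto Q (u @ [True]) = smul_set (smul (r @ lblk q u) pt) T'"
      using gQ[OF lu, of True] x_def by simp
    have "smul_set x (goto Pt (t @ [True])) = lpaths (smul x (pt @ q n True)) (lsh (Suc n) q)"
      unfolding gPs[OF lt] pt_def[symmetric] by (rule smul_set_lpaths) (simp add: lx)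
    also have "\<dots> = goto Pt (u @ [True])"
      using smul_app[of x pt "q n True"] lx gPs[OF lu] by (simp add: x_def smul_xor[OF ll])
    finally show "goto Q (u @ [True]) \<subseteq> goto Pt (u @ [True])"
      using \<open>smul_set x T' = _\<close> gQ[OF lu, of True] smul_set_mono[OF order.trans[OF T'T subT], of x]
      by (metis \<open>lpaths (smul x (pt @ w1)) q1 = _\<close>)
  qed
  have QLT: "Q \<in> LT" unfolding Q_def using LT_lpaths[OF v3] .
  have split: "\<exists>u b. s' = u @ [b] \<and> length u = n" if "length s' = Suc n" for s'
    using that by (metis length_Suc_conv_rev)
  have QLC: "Q \<in> LC (Suc n) P"
  proof -
    have "goto Q s' \<in> P" if ls': "length s' = Suc n" for s'
    proof -
      obtain u b where ub: "s' = u @ [b]" "length u = n" using split[OF ls'] by blast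
      then show ?thesis using gQ0(1)[OF ub(2)] gQ1(1)[OF ub(2)] LTF_smul[OF P S'P] LTF_smul[OF P T'P]
        by (cases b) auto
    qed
    then show ?thesis unfolding LC_def using QLT by blast
  qed
  have "Q \<subseteq> Pt"
  proof (rule LT_sub_by_goto[OF QLT, of "Suc n"])
    fix s' :: "bool list" assume "length s' = Suc n"
    then obtain u b where ub: "s' = u @ [b]" "length u = n" using split by blast
    then show "goto Q s' \<subseteq> goto Pt s'" using gQ0(2)[OF ub(2)] gQ1(2)[OF ub(2)] by (cases b) auto
  qed
  moreover have "spl Q k = spl Pt k" if "k < Suc n" for k
  proof -
    have "(\<Sum>j<k. length (q3 j False)) = (\<Sum>j<k. length (q j False))"
      using that by (intro sum.cong) (auto simp: q3_def)
    then show ?thesis unfolding Q_def Pte spl_lpaths[OF v3] spl_lpaths[OF v] by simp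
  qed
  ultimately have "subn Q (Suc n) Pt" unfolding subn_def by blast
  moreover have "goto Q (s @ [False]) \<subseteq> S"
    using gQ[OF ls, of False] r1e S'e S'S ps_def by simp
  moreover have "goto Q (t @ [True]) \<subseteq> T"
    using gQ[OF lt, of True] r1e' T'e T'T pt_def by simp
  ultimately show ?thesis using QLC by blast
qed

theorem lemma4p1:
  fixes P :: "bool list set set" and n :: nat
  assumes "LTF P"
  shows
  "(\<forall>T s0. T \<in> LT \<and> length s0 = n \<longrightarrow> (goto T s0 \<in> P \<longleftrightarrow> T \<in> LC n P))
   \<and> (\<forall>Pt s0 S. Pt \<in> LC n P \<and> length s0 = n \<and> S \<in> P \<and> S \<subseteq> goto Pt s0 \<longrightarrow>
        (\<exists>Q \<in> LC n P. subn Q n Pt \<and> goto Q s0 = S))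
   \<and> (\<forall>Pt D. Pt \<in> LC n P \<and> open_dense P D \<longrightarrow>
        (\<exists>Q \<in> LC n P. subn Q n Pt \<and> (\<forall>s. length s = n \<longrightarrow> goto Q s \<in> D)))
   \<and> (\<forall>Pt S T s t \<sigma>. Pt \<in> LC n P \<and> S \<in> P \<and> T \<in> P \<and> length s = n \<and> length t = n
        \<and> S \<subseteq> goto Pt (s @ [False]) \<and> T \<subseteq> goto Pt (t @ [True]) \<and> T = smul_set \<sigma> S \<longrightarrow>
        (\<exists>Q \<in> LC (Suc n) P. subn Q (Suc n) Pt
            \<and> goto Q (s @ [False]) \<subseteq> S \<and> goto Q (t @ [True]) \<subseteq> T))"
proof (intro conjI allI impI)
  show "\<And>T s0. T \<in> LT \<and> length s0 = n \<Longrightarrow> (goto T s0 \<in> P) = (T \<in> LC n P)"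
    using part1[OF assms] by blast
  show "\<And>Pt s0 S. Pt \<in> LC n P \<and> length s0 = n \<and> S \<in> P \<and> S \<subseteq> goto Pt s0 \<Longrightarrow>
        \<exists>Q\<in>LC n P. subn Q n Pt \<and> goto Q s0 = S"
    using part2[OF assms] by blast
  show "\<And>Pt D. Pt \<in> LC n P \<and> open_dense P D \<Longrightarrow>
        \<exists>Q\<in>LC n P. subn Q n Pt \<and> (\<forall>s. length s = n \<longrightarrow> goto Q s \<in> D)"
    using part3[OF assms] by blast
  show "\<And>Pt S T s t \<sigma>. Pt \<in> LC n P \<and> S \<in> P \<and> T \<in> P \<and> length s = n \<and> length t = n
        \<and> S \<subseteq> goto Pt (s @ [False]) \<and> T \<subseteq> goto Pt (t @ [True]) \<and> T = smul_set \<sigma> S \<Longrightarrow>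
        \<exists>Q \<in> LC (Suc n) P. subn Q (Suc n) Pt \<and> goto Q (s @ [False]) \<subseteq> S \<and> goto Q (t @ [True]) \<subseteq> T"
    using part4[OF assms] by blast
qed

end
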